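(* Let $K\subseteq\mathbb{R}^d$ be compact, let $f:K\to\mathbb{R}$ and $F:K\to\mathbb{R}^d$ be continuous, and let $\gamma:[a,b]\to K$ be a rectifiable path. Suppose that for all but finitely many points $x\in\gamma([a,b])$ one has $\lim_{y\to x,\,y\in K\setminus\{x\}}\frac{f(y)-f(x)-\langle F(x),y-x\rangle}{|y-x|}=0$. Then $\int_\gamma F=f(\gamma(b))-f(\gamma(a))$.
   Context: A path $\gamma:[a,b]\to K$ is a continuous map; its length is $L(\gamma)=\sup\{\sum_{j=1}^n|\gamma(t_j)-\gamma(t_{j-1})|: a=t_0<\dots<t_n=b\}$, and $\gamma$ is rectifiable if $L(\gamma)<\infty$. For continuous $F:K\to\mathbb{R}^d$ and rectifiable $\gamma$, the path integral $\int_\gamma F$ is the limit of the Riemann–Stieltjes sums $\sum_{j=1}^n\langle F(\gamma(\tau_j)),\gamma(t_j)-\gamma(t_{j-1})\rangle$ over partitions $a=t_0<\dots<t_n=b$ with mesh tending to $0$ and $t_{j-1}\le\tau_j\le t_j$. *)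

theory Defs
  imports "HOL-Analysis.Analysis"
begin

definition is_partition :: "real \<Rightarrow> real \<Rightarrow> nat \<Rightarrow> (nat \<Rightarrow> real) \<Rightarrow> bool" where
  "is_partition a b n t \<longleftrightarrow> t 0 = a \<and> t n = b \<and> (\<forall>j<n. t j < t (Suc j))"

definition rectifiable_path_on :: "real \<Rightarrow> real \<Rightarrow> (real \<Rightarrow> 'a::real_normed_vector) \<Rightarrow> bool" where
  "rectifiable_path_on a b \<gamma> \<longleftrightarrow>
     bdd_above {(\<Sum>j<n. norm (\<gamma> (t (Suc j)) - \<gamma> (t j))) | n t. is_partition a b n t}"

definition has_path_integral ::
  "('a::real_inner \<Rightarrow> 'a) \<Rightarrow> (real \<Rightarrow> 'a) \<Rightarrow> real \<Rightarrow> real \<Rightarrow> real \<Rightarrow> bool" where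
  "has_path_integral F \<gamma> a b I \<longleftrightarrow>
     (\<forall>\<epsilon>>0. \<exists>\<delta>>0. \<forall>n t \<tau>.
        is_partition a b n t \<and> (\<forall>j<n. t (Suc j) - t j < \<delta>) \<and>
        (\<forall>j<n. t j \<le> \<tau> j \<and> \<tau> j \<le> t (Suc j)) \<longrightarrow>
        \<bar>(\<Sum>j<n. F (\<gamma> (\<tau> j)) \<bullet> (\<gamma> (t (Suc j)) - \<gamma> (t j))) - I\<bar> < \<epsilon>)"

end

theory Submission
  imports Defs
begin

definition tagged :: "real \<Rightarrow> real \<Rightarrow> nat \<Rightarrow> (nat \<Rightarrow> real) \<Rightarrow> (nat \<Rightarrow> real) \<Rightarrow> bool" where
  "tagged u v n t \<tau> \<longleftrightarrow> is_partition u v n t \<and> (\<forall>j<n. t j \<le> \<tau> j \<and> \<tau> j \<le> t (Suc j))"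

definition psum :: "(real \<Rightarrow> real \<Rightarrow> real \<Rightarrow> 'b::ab_group_add) \<Rightarrow> nat \<Rightarrow> (nat \<Rightarrow> real) \<Rightarrow> (nat \<Rightarrow> real) \<Rightarrow> 'b" where
  "psum g n t \<tau> = (\<Sum>k<n. g (t k) (t (Suc k)) (\<tau> k))"

lemma part_mono: "is_partition u v n t \<Longrightarrow> i \<le> j \<Longrightarrow> j \<le> n \<Longrightarrow> t i \<le> t j"
proof (induction j)
  case 0 then show ?case by simp
next
  case (Suc j)
  show ?case
  proof (cases "i = Suc j")
    case True then show ?thesis by simp
  next
    case False
    then have "i \<le> j" using Suc.prems by simp
    then have "t i \<le> t j" using Suc by simp
    moreover have "t j < t (Suc j)" using Suc.prems unfolding is_partition_def by simp
    ultimately show ?thesis by simp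
  qed
qed

lemma part_range: "is_partition u v n t \<Longrightarrow> j \<le> n \<Longrightarrow> u \<le> t j \<and> t j \<le> v"
  using part_mono[of u v n t 0 j] part_mono[of u v n t j n] by (auto simp: is_partition_def)

lemma part_le: "is_partition u v n t \<Longrightarrow> u \<le> v"
  using part_range[of u v n t 0] by auto

lemma sum_split: fixes n1 n2 :: nat shows "(\<Sum>k<n1+n2. g k) = (\<Sum>k<n1. g k) + (\<Sum>k<n2. (g (k+n1) :: 'b::ab_group_add))"
  by (induct n2) (auto simp: ac_simps)

lemma concat:
  assumes "tagged u c n1 t1 \<tau>1" "tagged c v n2 t2 \<tau>2"
  shows "\<exists>t \<tau>. tagged u v (n1+n2) t \<tau> \<and>
     (\<forall>k<n1. t k = t1 k \<and> t (Suc k) = t1 (Suc k) \<and> \<tau> k = \<tau>1 k) \<and>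
     (\<forall>k<n2. t (k+n1) = t2 k \<and> t (Suc (k+n1)) = t2 (Suc k) \<and> \<tau> (k+n1) = \<tau>2 k)"
proof -
  define t where "t k = (if k \<le> n1 then t1 k else t2 (k - n1))" for k
  define \<tau> where "\<tau> k = (if k < n1 then \<tau>1 k else \<tau>2 (k - n1))" for k
  have e1: "t1 n1 = c" "t2 0 = c" "t1 0 = u" "t2 n2 = v"
    using assms by (auto simp: tagged_def is_partition_def)
  have A: "\<forall>k<n1. t k = t1 k \<and> t (Suc k) = t1 (Suc k) \<and> \<tau> k = \<tau>1 k"
    by (auto simp: t_def \<tau>_def)
  have B: "\<forall>k<n2. t (k+n1) = t2 k \<and> t (Suc (k+n1)) = t2 (Suc k) \<and> \<tau> (k+n1) = \<tau>2 k"
    using e1 by (auto simp: t_def \<tau>_def Suc_diff_le)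
  have C: "\<forall>j<n1+n2. t j < t (Suc j) \<and> t j \<le> \<tau> j \<and> \<tau> j \<le> t (Suc j)"
  proof (intro allI impI)
    fix j assume j: "j < n1 + n2"
    show "t j < t (Suc j) \<and> t j \<le> \<tau> j \<and> \<tau> j \<le> t (Suc j)"
    proof (cases "j < n1")
      case True then show ?thesis using A assms(1) by (auto simp: tagged_def is_partition_def)
    next
      case False
      define k where "k = j - n1"
      have k: "j = k + n1" "k < n2" using j False by (auto simp: k_def)
      then show ?thesis using B assms(2) by (auto simp: tagged_def is_partition_def)
    qed
  qed
  have "t 0 = u" "t (n1+n2) = v"
    using e1 by (auto simp: t_def)
  then have "tagged u v (n1+n2) t \<tau>" using C by (auto simp: tagged_def is_partition_def)
  then show ?thesis using A B by blast
qed

lemma psum_concat: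
  assumes "\<forall>k<n1. t k = t1 k \<and> t (Suc k) = t1 (Suc k) \<and> \<tau> k = \<tau>1 k"
    "\<forall>k<n2. t (k+n1) = t2 k \<and> t (Suc (k+n1)) = t2 (Suc k) \<and> \<tau> (k+n1) = \<tau>2 k"
  shows "psum g (n1+n2) t \<tau> = psum g n1 t1 \<tau>1 + psum g n2 t2 \<tau>2"
proof -
  have 1: "(\<Sum>k<n1. g (t k) (t (Suc k)) (\<tau> k)) = (\<Sum>k<n1. g (t1 k) (t1 (Suc k)) (\<tau>1 k))"
    using assms(1) by (intro sum.cong) auto
  have 2: "(\<Sum>k<n2. g (t (k+n1)) (t (Suc (k+n1))) (\<tau> (k+n1))) = (\<Sum>k<n2. g (t2 k) (t2 (Suc k)) (\<tau>2 k))"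
    using assms(2) by (intro sum.cong) auto
  show ?thesis unfolding psum_def sum_split using 1 2 by simp
qed

lemma single: "u < v \<Longrightarrow> u \<le> \<sigma> \<Longrightarrow> \<sigma> \<le> v \<Longrightarrow> tagged u v 1 (\<lambda>k. if k = 0 then u else v) (\<lambda>_. \<sigma>)"
  by (auto simp: tagged_def is_partition_def)

lemma psum_single: "psum g 1 (\<lambda>k. if k = 0 then u else v) (\<lambda>_. \<sigma>) = g u v \<sigma>"
  by (simp add: psum_def)

lemma psum_single': "psum g (Suc 0) (\<lambda>k. if k = 0 then u else v) (\<lambda>_. \<sigma>) = g u v \<sigma>"
  by (simp add: psum_def)

lemma empty_tagged: "tagged u u 0 (\<lambda>_. u) (\<lambda>_. u)"
  by (auto simp: tagged_def is_partition_def)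

lemma psum_0: "psum g 0 t \<tau> = 0" by (simp add: psum_def)

lemma psum_tele: "is_partition u v n t \<Longrightarrow> psum (\<lambda>p q s. h q - h p) n t \<tau> = h v - h u"
  unfolding psum_def using sum_lessThan_telescope[of "\<lambda>k. h (t k)" n] by (simp add: is_partition_def)

lemma concat2:
  assumes "tagged u c n1 t1 \<tau>1" "tagged c v n2 t2 \<tau>2"
    "\<forall>k<n1. P (t1 k) (t1 (Suc k)) (\<tau>1 k)" "\<forall>k<n2. P (t2 k) (t2 (Suc k)) (\<tau>2 k)"
  shows "\<exists>t \<tau>. tagged u v (n1+n2) t \<tau> \<and> (\<forall>k<n1+n2. P (t k) (t (Suc k)) (\<tau> k)) \<and>
     (\<forall>g::real\<Rightarrow>real\<Rightarrow>real\<Rightarrow>real. psum g (n1+n2) t \<tau> = psum g n1 t1 \<tau>1 + psum g n2 t2 \<tau>2)"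
proof -
  obtain t \<tau> where T: "tagged u v (n1+n2) t \<tau>"
    and A: "\<forall>k<n1. t k = t1 k \<and> t (Suc k) = t1 (Suc k) \<and> \<tau> k = \<tau>1 k"
    and B: "\<forall>k<n2. t (k+n1) = t2 k \<and> t (Suc (k+n1)) = t2 (Suc k) \<and> \<tau> (k+n1) = \<tau>2 k"
    using concat[OF assms(1,2)] by blast
  have "\<forall>k<n1+n2. P (t k) (t (Suc k)) (\<tau> k)"
  proof (intro allI impI)
    fix k assume k: "k < n1 + n2"
    show "P (t k) (t (Suc k)) (\<tau> k)"
    proof (cases "k < n1")
      case True then show ?thesis using A assms(3) by auto
    next
      case False
      define j where "j = k - n1"
      have j: "k = j + n1" "j < n2" using k False by (auto simp: j_def)
      then show ?thesis using B assms(4) by auto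
    qed
  qed
  then show ?thesis using T psum_concat[OF A B] by blast
qed

lemma exists_tagged: "u \<le> v \<Longrightarrow> \<exists>n t \<tau>. tagged u v n t \<tau>"
  using single[of u v u] empty_tagged[of u] by (cases "u = v") auto

lemma psum_nonneg: "(\<And>p q s. g p q s \<ge> 0) \<Longrightarrow> psum g n t \<tau> \<ge> (0::real)"
  unfolding psum_def by (simp add: sum_nonneg)

locale sett =
  fixes K :: "'a::euclidean_space set" and f :: "'a \<Rightarrow> real" and F :: "'a \<Rightarrow> 'a"
    and \<gamma> :: "real \<Rightarrow> 'a" and a b :: real
  assumes K: "compact K"
    and cf: "continuous_on K f" and cF: "continuous_on K F"
    and ab: "a \<le> b" and cg: "continuous_on {a..b} \<gamma>" and img: "\<gamma> ` {a..b} \<subseteq> K"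
    and rect: "rectifiable_path_on a b \<gamma>"
    and fin: "finite {x \<in> \<gamma> ` {a..b}. \<not> (((\<lambda>y. (f y - f x - F x \<bullet> (y - x)) / norm (y - x))
              \<longlongrightarrow> 0) (at x within K))}"
begin

definition Exc where "Exc = {x \<in> \<gamma> ` {a..b}. \<not> (((\<lambda>y. (f y - f x - F x \<bullet> (y - x)) / norm (y - x))
              \<longlongrightarrow> 0) (at x within K))}"

lemma finExc: "finite Exc" using fin by (simp add: Exc_def)

abbreviation RS where "RS n t \<tau> \<equiv> psum (\<lambda>p q s. F (\<gamma> s) \<bullet> (\<gamma> q - \<gamma> p)) n t \<tau>"
abbreviation PL where "PL n t \<tau> \<equiv> psum (\<lambda>p q s. norm (\<gamma> q - \<gamma> p)) n t \<tau>"

lemma bound: "\<exists>B\<ge>0. \<forall>n t. is_partition a b n t \<longrightarrow> (\<Sum>j<n. norm (\<gamma> (t (Suc j)) - \<gamma> (t j))) \<le> B"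
proof -
  obtain M where "\<forall>x\<in>{(\<Sum>j<n. norm (\<gamma> (t (Suc j)) - \<gamma> (t j))) | n t. is_partition a b n t}. x \<le> M"
    using rect unfolding rectifiable_path_on_def bdd_above_def by blast
  then show ?thesis by (intro exI[of _ "max M 0"]) fastforce
qed

definition BB where "BB = (SOME B. B \<ge> 0 \<and> (\<forall>n t. is_partition a b n t \<longrightarrow> (\<Sum>j<n. norm (\<gamma> (t (Suc j)) - \<gamma> (t j))) \<le> B))"

lemma BB: "BB \<ge> 0" "is_partition a b n t \<Longrightarrow> (\<Sum>j<n. norm (\<gamma> (t (Suc j)) - \<gamma> (t j))) \<le> BB"
  using someI_ex[OF bound] unfolding BB_def by blast+

lemma PL_bound: assumes "a \<le> u" "v \<le> b" "tagged u v n t \<tau>" shows "PL n t \<tau> \<le> BB"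
proof -
  have uv: "u \<le> v" using assms(3) part_le tagged_def by blast
  obtain n1 t1 \<tau>1 where 1: "tagged a u n1 t1 \<tau>1" using exists_tagged assms(1) by blast
  obtain n2 t2 \<tau>2 where 2: "tagged v b n2 t2 \<tau>2" using exists_tagged assms(2) by blast
  obtain t' \<tau>' where 3: "tagged a v (n1+n) t' \<tau>'"
     "\<forall>g::real\<Rightarrow>real\<Rightarrow>real\<Rightarrow>real. psum g (n1+n) t' \<tau>' = psum g n1 t1 \<tau>1 + psum g n t \<tau>"
    using concat2[OF 1 assms(3), of "\<lambda>_ _ _. True"] by auto
  obtain t'' \<tau>'' where 4: "tagged a b (n1+n+n2) t'' \<tau>''"
     "\<forall>g::real\<Rightarrow>real\<Rightarrow>real\<Rightarrow>real. psum g (n1+n+n2) t'' \<tau>'' = psum g (n1+n) t' \<tau>' + psum g n2 t2 \<tau>2"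
    using concat2[OF 3(1) 2, of "\<lambda>_ _ _. True"] by auto
  have "PL (n1+n+n2) t'' \<tau>'' \<le> BB" using BB(2)[of "n1+n+n2" t''] 4(1) by (simp add: tagged_def psum_def)
  moreover have "PL (n1+n+n2) t'' \<tau>'' = PL n1 t1 \<tau>1 + PL n t \<tau> + PL n2 t2 \<tau>2"
    using 3(2) 4(2) by simp
  moreover have "PL n1 t1 \<tau>1 \<ge> 0" "PL n2 t2 \<tau>2 \<ge> 0" by (auto intro: psum_nonneg)
  ultimately show ?thesis by linarith
qed

lemma local_diff:
  assumes c: "c \<in> {a..b}" and nc: "\<gamma> c \<notin> Exc" and e: "e > 0"
  shows "\<exists>h>0. \<forall>s\<in>{a..b}. \<bar>s - c\<bar> < h \<longrightarrow>
     \<bar>f (\<gamma> s) - f (\<gamma> c) - F (\<gamma> c) \<bullet> (\<gamma> s - \<gamma> c)\<bar> \<le> e * norm (\<gamma> s - \<gamma> c)"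
proof -
  let ?x = "\<gamma> c"
  have "((\<lambda>y. (f y - f ?x - F ?x \<bullet> (y - ?x)) / norm (y - ?x)) \<longlongrightarrow> 0) (at ?x within K)"
    using nc c by (auto simp: Exc_def)
  then have "eventually (\<lambda>y. dist ((f y - f ?x - F ?x \<bullet> (y - ?x)) / norm (y - ?x)) 0 < e) (at ?x within K)"
    by (rule tendstoD[OF _ e])
  then obtain r where r: "r > 0" "\<forall>y\<in>K. y \<noteq> ?x \<and> dist y ?x < r \<longrightarrow>
      dist ((f y - f ?x - F ?x \<bullet> (y - ?x)) / norm (y - ?x)) 0 < e"
    unfolding eventually_at by blast
  obtain h where h: "h > 0" "\<forall>s\<in>{a..b}. dist s c < h \<longrightarrow> dist (\<gamma> s) ?x < r"
    using cg c r(1) unfolding continuous_on_iff by blast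
  show ?thesis
  proof (intro exI[of _ h] conjI h(1) ballI impI)
    fix s assume s: "s \<in> {a..b}" "\<bar>s - c\<bar> < h"
    show "\<bar>f (\<gamma> s) - f ?x - F ?x \<bullet> (\<gamma> s - ?x)\<bar> \<le> e * norm (\<gamma> s - ?x)"
    proof (cases "\<gamma> s = ?x")
      case True then show ?thesis by simp
    next
      case False
      have "\<gamma> s \<in> K" using img s(1) by blast
      moreover have "dist (\<gamma> s) ?x < r" using h(2) s by (simp add: dist_real_def)
      ultimately have "\<bar>(f (\<gamma> s) - f ?x - F ?x \<bullet> (\<gamma> s - ?x)) / norm (\<gamma> s - ?x)\<bar> < e"
        using r(2) False by (simp add: dist_real_def)
      moreover have "norm (\<gamma> s - ?x) > 0" using False by simp
      ultimately show ?thesis by (simp add: abs_div_pos divide_less_eq)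
    qed
  qed
qed

lemma good_bound:
  assumes T: "tagged u v n t \<tau>"
    and Q: "\<forall>k<n. \<bar>f (\<gamma> (t (Suc k))) - f (\<gamma> (t k)) - F (\<gamma> (\<tau> k)) \<bullet> (\<gamma> (t (Suc k)) - \<gamma> (t k))\<bar>
               \<le> e * norm (\<gamma> (t (Suc k)) - \<gamma> (t k))"
  shows "\<bar>RS n t \<tau> - (f (\<gamma> v) - f (\<gamma> u))\<bar> \<le> e * PL n t \<tau>"
proof -
  have "f (\<gamma> v) - f (\<gamma> u) = psum (\<lambda>p q s. f (\<gamma> q) - f (\<gamma> p)) n t \<tau>"
    using psum_tele[of u v n t "\<lambda>x. f (\<gamma> x)"] T by (simp add: tagged_def)
  then have "RS n t \<tau> - (f (\<gamma> v) - f (\<gamma> u)) = (\<Sum>k<n. F (\<gamma> (\<tau> k)) \<bullet> (\<gamma> (t (Suc k)) - \<gamma> (t k))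
       - (f (\<gamma> (t (Suc k))) - f (\<gamma> (t k))))"
    by (simp add: psum_def sum_subtractf)
  also have "\<bar>\<dots>\<bar> \<le> (\<Sum>k<n. \<bar>F (\<gamma> (\<tau> k)) \<bullet> (\<gamma> (t (Suc k)) - \<gamma> (t k))
       - (f (\<gamma> (t (Suc k))) - f (\<gamma> (t k)))\<bar>)" by (rule sum_abs)
  also have "\<dots> \<le> (\<Sum>k<n. e * norm (\<gamma> (t (Suc k)) - \<gamma> (t k)))"
  proof (rule sum_mono)
    fix k assume "k \<in> {..<n}"
    then show "\<bar>F (\<gamma> (\<tau> k)) \<bullet> (\<gamma> (t (Suc k)) - \<gamma> (t k)) - (f (\<gamma> (t (Suc k))) - f (\<gamma> (t k)))\<bar>
       \<le> e * norm (\<gamma> (t (Suc k)) - \<gamma> (t k))" using Q by (auto simp: abs_minus_commute)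
  qed
  also have "\<dots> = e * PL n t \<tau>" by (simp add: psum_def sum_distrib_left)
  finally show ?thesis .
qed

lemma gauge:
  assumes uv: "a \<le> u" "u \<le> v" "v \<le> b" and nE: "\<forall>c\<in>{u..v}. \<gamma> c \<notin> Exc" and e: "e > 0"
  shows "\<exists>n t \<tau>. tagged u v n t \<tau> \<and> \<bar>RS n t \<tau> - (f (\<gamma> v) - f (\<gamma> u))\<bar> \<le> e * PL n t \<tau>"
proof -
  define Q where "Q p q \<sigma> \<longleftrightarrow> \<bar>f (\<gamma> q) - f (\<gamma> p) - F (\<gamma> \<sigma>) \<bullet> (\<gamma> q - \<gamma> p)\<bar> \<le> e * norm (\<gamma> q - \<gamma> p)" for p q \<sigma>
  define good where "good s \<longleftrightarrow> (\<exists>n t \<tau>. tagged u s n t \<tau> \<and> (\<forall>k<n. Q (t k) (t (Suc k)) (\<tau> k)))" for s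
  define G where "G = {s\<in>{u..v}. good s}"
  have uG: "u \<in> G" unfolding G_def good_def using uv empty_tagged[of u] by auto
  have bdd: "bdd_above G" unfolding G_def by (auto intro: bdd_aboveI[of _ v])
  define c where "c = Sup G"
  have uc: "u \<le> c" unfolding c_def using uG bdd by (rule cSup_upper)
  have cv: "c \<le> v" unfolding c_def using uG by (intro cSup_least) (auto simp: G_def)
  have cab: "c \<in> {a..b}" using uc cv uv by auto
  obtain h where h: "h > 0" "\<forall>s\<in>{a..b}. \<bar>s - c\<bar> < h \<longrightarrow>
     \<bar>f (\<gamma> s) - f (\<gamma> c) - F (\<gamma> c) \<bullet> (\<gamma> s - \<gamma> c)\<bar> \<le> e * norm (\<gamma> s - \<gamma> c)"
    using local_diff[OF cab _ e] nE uc cv by auto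
  have "\<exists>s\<in>G. c - h < s" using less_cSup_iff[of G "c - h"] uG bdd h(1) by (auto simp: c_def)
  then obtain s where sG: "s \<in> G" and sh: "c - h < s" by blast
  have sc: "s \<le> c" unfolding c_def using sG bdd by (rule cSup_upper)
  have goodc: "good c"
  proof (cases "s = c")
    case True then show ?thesis using sG by (simp add: G_def)
  next
    case False
    then have sc': "s < c" using sc by simp
    obtain n1 t1 \<tau>1 where 1: "tagged u s n1 t1 \<tau>1" "\<forall>k<n1. Q (t1 k) (t1 (Suc k)) (\<tau>1 k)"
      using sG by (auto simp: G_def good_def)
    have sab: "s \<in> {a..b}" using sG uv by (auto simp: G_def)
    have "\<bar>f (\<gamma> s) - f (\<gamma> c) - F (\<gamma> c) \<bullet> (\<gamma> s - \<gamma> c)\<bar> \<le> e * norm (\<gamma> s - \<gamma> c)"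
      using h(2) sab sh sc by auto
    moreover have "f (\<gamma> c) - f (\<gamma> s) - F (\<gamma> c) \<bullet> (\<gamma> c - \<gamma> s) = - (f (\<gamma> s) - f (\<gamma> c) - F (\<gamma> c) \<bullet> (\<gamma> s - \<gamma> c))"
      by (simp add: inner_diff_right)
    ultimately have "Q s c c" unfolding Q_def by (simp add: norm_minus_commute)
    then have 2: "\<forall>k<1. Q ((\<lambda>k. if k = 0 then s else c) k) ((\<lambda>k. if k = 0 then s else c) (Suc k)) ((\<lambda>_. c) k)"
      by simp
    show ?thesis using concat2[OF 1(1) single[OF sc' sc order_refl] 1(2) 2] unfolding good_def by blast
  qed
  have cv2: "c = v"
  proof (rule ccontr)
    assume "c \<noteq> v"
    then have "c < v" using cv by simp
    define c' where "c' = min v (c + h/2)"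
    have cc': "c < c'" using \<open>c < v\<close> h(1) by (simp add: c'_def)
    have c'ab: "c' \<in> {a..b}" using cc' cab uv by (auto simp: c'_def)
    have "Q c c' c" unfolding Q_def using h(2) c'ab cc' h(1) by (auto simp: c'_def)
    then have 2: "\<forall>k<1. Q ((\<lambda>k. if k = 0 then c else c') k) ((\<lambda>k. if k = 0 then c else c') (Suc k)) ((\<lambda>_. c) k)"
      by simp
    obtain n1 t1 \<tau>1 where 1: "tagged u c n1 t1 \<tau>1" "\<forall>k<n1. Q (t1 k) (t1 (Suc k)) (\<tau>1 k)"
      using goodc by (auto simp: good_def)
    have "good c'" using concat2[OF 1(1) single[OF cc' order_refl less_imp_le[OF cc']] 1(2) 2] unfolding good_def by blast
    then have "c' \<in> G" using uc cc' by (auto simp: G_def c'_def)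
    then have "c' \<le> c" unfolding c_def using bdd by (rule cSup_upper)
    then show False using cc' by simp
  qed
  obtain n t \<tau> where "tagged u v n t \<tau>" "\<forall>k<n. Q (t k) (t (Suc k)) (\<tau> k)"
    using goodc cv2 by (auto simp: good_def)
  then show ?thesis using good_bound[of u v n t \<tau> e] unfolding Q_def by blast
qed

lemma phi_cont:
  assumes p: "p \<in> {a..b}" and e: "e > 0"
  shows "\<exists>h>0. \<forall>s\<in>{a..b}. \<bar>s - p\<bar> < h \<longrightarrow>
     \<bar>(f (\<gamma> s) - F (\<gamma> p) \<bullet> \<gamma> s) - (f (\<gamma> p) - F (\<gamma> p) \<bullet> \<gamma> p)\<bar> < e"
proof -
  have "continuous_on {a..b} (\<lambda>s. f (\<gamma> s))" using continuous_on_compose2[OF cf cg img] .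
  moreover have "continuous_on {a..b} (\<lambda>s. F (\<gamma> p) \<bullet> \<gamma> s)"
    by (intro continuous_intros cg)
  ultimately have "continuous_on {a..b} (\<lambda>s. f (\<gamma> s) - F (\<gamma> p) \<bullet> \<gamma> s)"
    by (intro continuous_on_diff)
  then show ?thesis using p e unfolding continuous_on_iff dist_real_def by blast
qed

lemma approx0:
  "\<forall>u v (e::real). a \<le> u \<and> u \<le> v \<and> v \<le> b \<and> 0 < e \<and> card (Exc \<inter> \<gamma> ` {u..v}) = N \<longrightarrow>
     (\<exists>n t \<tau>. tagged u v n t \<tau> \<and> \<bar>RS n t \<tau> - (f (\<gamma> v) - f (\<gamma> u))\<bar> \<le> e)"
proof (induction N rule: less_induct)
  case (less N)
  show ?case
  proof (intro allI impI, elim conjE)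
    fix u v and e :: real assume uv: "a \<le> u" "u \<le> v" "v \<le> b" "0 < e" and cN: "card (Exc \<inter> \<gamma> ` {u..v}) = N"
    show "\<exists>n t \<tau>. tagged u v n t \<tau> \<and> \<bar>RS n t \<tau> - (f (\<gamma> v) - f (\<gamma> u))\<bar> \<le> e"
    proof (cases "Exc \<inter> \<gamma> ` {u..v} = {}")
      case True
      have B0: "BB \<ge> 0" by (rule BB)
      have "e / (BB + 1) > 0" using uv(4) B0 by simp
      then obtain n t \<tau> where T: "tagged u v n t \<tau>"
        "\<bar>RS n t \<tau> - (f (\<gamma> v) - f (\<gamma> u))\<bar> \<le> e / (BB + 1) * PL n t \<tau>"
        using gauge[OF uv(1-3)] True by blast
      have "PL n t \<tau> \<le> BB + 1" using PL_bound[OF uv(1) uv(3) T(1)] by simp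
      then have "e / (BB + 1) * PL n t \<tau> \<le> e / (BB + 1) * (BB + 1)"
        using \<open>e / (BB + 1) > 0\<close> by (intro mult_left_mono) auto
      also have "\<dots> = e" using B0 by simp
      finally show ?thesis using T by force
    next
      case False
      then obtain x where xE: "x \<in> Exc" and xg: "x \<in> \<gamma> ` {u..v}" by blast
      have IH: "\<exists>n t \<tau>. tagged u' v' n t \<tau> \<and> \<bar>RS n t \<tau> - (f (\<gamma> v') - f (\<gamma> u'))\<bar> \<le> e'"
        if "a \<le> u'" "u' \<le> v'" "v' \<le> b" "0 < e'" "{u'..v'} \<subseteq> {u..v}" "x \<notin> \<gamma> ` {u'..v'}" for u' v' and e' :: real
      proof -
        have "Exc \<inter> \<gamma> ` {u'..v'} \<subset> Exc \<inter> \<gamma> ` {u..v}"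
          using that(5,6) xE xg by blast
        then have "card (Exc \<inter> \<gamma> ` {u'..v'}) < N"
          using cN finExc by (metis finite_Int psubset_card_mono)
        then show ?thesis using less.IH that(1-4) by blast
      qed
      define T where "T = {s \<in> {u..v}. \<gamma> s = x}"
      have cgs: "continuous_on {u..v} \<gamma>" using cg uv by (auto intro: continuous_on_subset)
      have clT: "closed T" unfolding T_def by (rule continuous_closed_preimage_constant[OF cgs]) simp
      have neT: "T \<noteq> {}" using xg by (auto simp: T_def)
      have bbT: "bdd_below T" "bdd_above T" unfolding T_def by (auto intro: bdd_belowI[of _ u] bdd_aboveI[of _ v])
      define p where "p = Inf T"
      define q where "q = Sup T"
      have pT: "p \<in> T" unfolding p_def by (rule closed_contains_Inf[OF neT bbT(1) clT])
      have qT: "q \<in> T" unfolding q_def by (rule closed_contains_Sup[OF neT bbT(2) clT])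
      have Tb: "p \<le> s" "s \<le> q" if "s \<in> T" for s
        using that bbT cInf_lower cSup_upper by (auto simp: p_def q_def)
      have puv: "u \<le> p" "p \<le> v" "\<gamma> p = x" using pT by (auto simp: T_def)
      have quv: "u \<le> q" "q \<le> v" "\<gamma> q = x" using qT by (auto simp: T_def)
      have pq: "p \<le> q" using Tb(2)[OF pT] .
      have e4: "e / 4 > 0" using uv(4) by simp
      obtain nL tL \<tau>L where L: "tagged u p nL tL \<tau>L" "\<bar>RS nL tL \<tau>L - (f x - f (\<gamma> u))\<bar> \<le> e / 2"
      proof (cases "u = p")
        case True
        then show ?thesis using that[of 0 "\<lambda>_. u" "\<lambda>_. u"] empty_tagged[of u] puv uv(4)
          by (simp add: psum_0)
      next
        case False
        then have up: "u < p" using puv by simp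
        have pab: "p \<in> {a..b}" using puv uv by auto
        obtain h where h: "h > 0" "\<forall>s\<in>{a..b}. \<bar>s - p\<bar> < h \<longrightarrow>
           \<bar>(f (\<gamma> s) - F (\<gamma> p) \<bullet> \<gamma> s) - (f (\<gamma> p) - F (\<gamma> p) \<bullet> \<gamma> p)\<bar> < e / 4"
          using phi_cont[OF pab e4] by blast
        define s where "s = max u (p - h/2)"
        have s: "u \<le> s" "s < p" "\<bar>s - p\<bar> < h" using up h(1) by (auto simp: s_def)
        have nx: "x \<notin> \<gamma> ` {u..s}"
        proof
          assume "x \<in> \<gamma> ` {u..s}"
          then obtain r where r: "r \<in> {u..s}" "\<gamma> r = x" by blast
          then have "r \<in> T" using s puv by (auto simp: T_def)
          then show False using Tb(1) r s by fastforce
        qed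
        obtain n1 t1 \<tau>1 where 1: "tagged u s n1 t1 \<tau>1" "\<bar>RS n1 t1 \<tau>1 - (f (\<gamma> s) - f (\<gamma> u))\<bar> \<le> e / 4"
          using IH[OF uv(1) s(1) _ e4 _ nx] s puv uv by auto
        obtain t' \<tau>' where 2: "tagged u p (n1+1) t' \<tau>'"
          "\<forall>g::real\<Rightarrow>real\<Rightarrow>real\<Rightarrow>real. psum g (n1+1) t' \<tau>' = psum g n1 t1 \<tau>1 + g s p p"
          using concat2[OF 1(1) single[OF s(2) less_imp_le[OF s(2)] order_refl], of "\<lambda>_ _ _. True"]
          by (auto simp: psum_single psum_single')
        have sab: "s \<in> {a..b}" using s uv puv by auto
        have "\<bar>(f (\<gamma> s) - F x \<bullet> \<gamma> s) - (f x - F x \<bullet> x)\<bar> < e / 4"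
          using h(2) sab s(3) puv(3) by auto
        then have B: "\<bar>F x \<bullet> (x - \<gamma> s) - (f x - f (\<gamma> s))\<bar> < e / 4"
          by (simp add: inner_diff_right abs_minus_commute algebra_simps)
        have eq: "RS (n1+1) t' \<tau>' - (f x - f (\<gamma> u)) =
            (RS n1 t1 \<tau>1 - (f (\<gamma> s) - f (\<gamma> u))) + (F x \<bullet> (x - \<gamma> s) - (f x - f (\<gamma> s)))"
          using 2(2) puv(3) by simp
        have "\<bar>RS (n1+1) t' \<tau>' - (f x - f (\<gamma> u))\<bar> \<le> e / 4 + e / 4"
          unfolding eq by (rule order_trans[OF abs_triangle_ineq add_mono[OF 1(2) less_imp_le[OF B]]])
        then have "\<bar>RS (n1+1) t' \<tau>' - (f x - f (\<gamma> u))\<bar> \<le> e / 2" by simp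
        then show ?thesis using that 2(1) by blast
      qed
      obtain nM tM \<tau>M where M: "tagged p q nM tM \<tau>M" "RS nM tM \<tau>M = 0"
      proof (cases "p = q")
        case True
        then show ?thesis using that[of 0 "\<lambda>_. p" "\<lambda>_. p"] empty_tagged[of p] by (simp add: psum_0)
      next
        case False
        then have "p < q" using pq by simp
        then show ?thesis using that[OF single[OF \<open>p < q\<close> order_refl pq]] puv quv
          by (simp add: psum_single psum_single')
      qed
      obtain nR tR \<tau>R where R: "tagged q v nR tR \<tau>R" "\<bar>RS nR tR \<tau>R - (f (\<gamma> v) - f x)\<bar> \<le> e / 2"
      proof (cases "q = v")
        case True
        then show ?thesis using that[of 0 "\<lambda>_. q" "\<lambda>_. q"] empty_tagged[of q] quv uv(4)
          by (simp add: psum_0)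
      next
        case False
        then have qv: "q < v" using quv by simp
        have qab: "q \<in> {a..b}" using quv uv by auto
        obtain h where h: "h > 0" "\<forall>s\<in>{a..b}. \<bar>s - q\<bar> < h \<longrightarrow>
           \<bar>(f (\<gamma> s) - F (\<gamma> q) \<bullet> \<gamma> s) - (f (\<gamma> q) - F (\<gamma> q) \<bullet> \<gamma> q)\<bar> < e / 4"
          using phi_cont[OF qab e4] by blast
        define s where "s = min v (q + h/2)"
        have s: "s \<le> v" "q < s" "\<bar>s - q\<bar> < h" using qv h(1) by (auto simp: s_def)
        have nx: "x \<notin> \<gamma> ` {s..v}"
        proof
          assume "x \<in> \<gamma> ` {s..v}"
          then obtain r where r: "r \<in> {s..v}" "\<gamma> r = x" by blast
          then have "r \<in> T" using s quv by (auto simp: T_def)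
          then show False using Tb(2) r s by fastforce
        qed
        have sab: "s \<in> {a..b}" using s uv quv by auto
        obtain n1 t1 \<tau>1 where 1: "tagged s v n1 t1 \<tau>1" "\<bar>RS n1 t1 \<tau>1 - (f (\<gamma> v) - f (\<gamma> s))\<bar> \<le> e / 4"
          using IH[OF _ s(1) uv(3) e4 _ nx] s quv uv sab by auto
        obtain t' \<tau>' where 2: "tagged q v (1+n1) t' \<tau>'"
          "\<forall>g::real\<Rightarrow>real\<Rightarrow>real\<Rightarrow>real. psum g (1+n1) t' \<tau>' = g q s q + psum g n1 t1 \<tau>1"
          using concat2[OF single[OF s(2) order_refl less_imp_le[OF s(2)]] 1(1), of "\<lambda>_ _ _. True"]
          by (auto simp: psum_single psum_single')
        have "\<bar>(f (\<gamma> s) - F x \<bullet> \<gamma> s) - (f x - F x \<bullet> x)\<bar> < e / 4"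
          using h(2) sab s(3) quv(3) by auto
        then have B: "\<bar>F x \<bullet> (\<gamma> s - x) - (f (\<gamma> s) - f x)\<bar> < e / 4"
          by (simp add: inner_diff_right abs_minus_commute algebra_simps)
        have eq: "RS (1+n1) t' \<tau>' - (f (\<gamma> v) - f x) =
            (F x \<bullet> (\<gamma> s - x) - (f (\<gamma> s) - f x)) + (RS n1 t1 \<tau>1 - (f (\<gamma> v) - f (\<gamma> s)))"
          using 2(2) quv(3) by simp
        have "\<bar>RS (1+n1) t' \<tau>' - (f (\<gamma> v) - f x)\<bar> \<le> e / 4 + e / 4"
          unfolding eq by (rule order_trans[OF abs_triangle_ineq add_mono[OF less_imp_le[OF B] 1(2)]])
        then have "\<bar>RS (1+n1) t' \<tau>' - (f (\<gamma> v) - f x)\<bar> \<le> e / 2" by simp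
        then show ?thesis using that 2(1) by blast
      qed
      obtain t1 \<tau>1 where C1: "tagged u q (nL+nM) t1 \<tau>1"
          "\<forall>g::real\<Rightarrow>real\<Rightarrow>real\<Rightarrow>real. psum g (nL+nM) t1 \<tau>1 = psum g nL tL \<tau>L + psum g nM tM \<tau>M"
        using concat2[OF L(1) M(1), of "\<lambda>_ _ _. True"] by auto
      obtain t2 \<tau>2 where C2: "tagged u v (nL+nM+nR) t2 \<tau>2"
          "\<forall>g::real\<Rightarrow>real\<Rightarrow>real\<Rightarrow>real. psum g (nL+nM+nR) t2 \<tau>2 = psum g (nL+nM) t1 \<tau>1 + psum g nR tR \<tau>R"
        using concat2[OF C1(1) R(1), of "\<lambda>_ _ _. True"] by auto
      have "\<bar>RS (nL+nM+nR) t2 \<tau>2 - (f (\<gamma> v) - f (\<gamma> u))\<bar> \<le> e"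
      proof -
        have eq: "RS (nL+nM+nR) t2 \<tau>2 - (f (\<gamma> v) - f (\<gamma> u)) =
            (RS nL tL \<tau>L - (f x - f (\<gamma> u))) + (RS nR tR \<tau>R - (f (\<gamma> v) - f x))"
          using C1(2) C2(2) M(2) by simp
        have "\<bar>RS (nL+nM+nR) t2 \<tau>2 - (f (\<gamma> v) - f (\<gamma> u))\<bar> \<le> e / 2 + e / 2"
          unfolding eq by (rule order_trans[OF abs_triangle_ineq add_mono[OF L(2) R(2)]])
        then show ?thesis by simp
      qed
      then show ?thesis using C2(1) by blast
    qed
  qed
qed

lemma approx:
  assumes "a \<le> u" "u \<le> v" "v \<le> b" "0 < e"
  shows "\<exists>n t \<tau>. tagged u v n t \<tau> \<and> \<bar>RS n t \<tau> - (f (\<gamma> v) - f (\<gamma> u))\<bar> \<le> e"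
  using approx0 assms by blast

lemma refine:
  assumes T: "tagged p q k s \<sigma>" and cl: "\<forall>r\<in>{p..q}. norm (F (\<gamma> \<tau>0) - F (\<gamma> r)) \<le> \<eta>"
  shows "\<bar>F (\<gamma> \<tau>0) \<bullet> (\<gamma> q - \<gamma> p) - RS k s \<sigma>\<bar> \<le> \<eta> * PL k s \<sigma>"
proof -
  have P: "is_partition p q k s" using T by (simp add: tagged_def)
  have tele: "\<gamma> q - \<gamma> p = (\<Sum>i<k. \<gamma> (s (Suc i)) - \<gamma> (s i))"
    using sum_lessThan_telescope[of "\<lambda>i. \<gamma> (s i)" k] P by (simp add: is_partition_def)
  have e1: "F (\<gamma> \<tau>0) \<bullet> (\<gamma> q - \<gamma> p) = (\<Sum>i<k. F (\<gamma> \<tau>0) \<bullet> (\<gamma> (s (Suc i)) - \<gamma> (s i)))"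
    unfolding tele by (rule inner_sum_right)
  have "F (\<gamma> \<tau>0) \<bullet> (\<gamma> q - \<gamma> p) - RS k s \<sigma> =
      (\<Sum>i<k. F (\<gamma> \<tau>0) \<bullet> (\<gamma> (s (Suc i)) - \<gamma> (s i))) - (\<Sum>i<k. F (\<gamma> (\<sigma> i)) \<bullet> (\<gamma> (s (Suc i)) - \<gamma> (s i)))"
    unfolding e1 psum_def ..
  also have "\<dots> = (\<Sum>i<k. (F (\<gamma> \<tau>0) - F (\<gamma> (\<sigma> i))) \<bullet> (\<gamma> (s (Suc i)) - \<gamma> (s i)))"
    by (simp only: sum_subtractf[symmetric] inner_diff_left)
  also have "\<bar>\<dots>\<bar> \<le> (\<Sum>i<k. \<bar>(F (\<gamma> \<tau>0) - F (\<gamma> (\<sigma> i))) \<bullet> (\<gamma> (s (Suc i)) - \<gamma> (s i))\<bar>)"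
    by (rule sum_abs)
  also have "\<dots> \<le> (\<Sum>i<k. \<eta> * norm (\<gamma> (s (Suc i)) - \<gamma> (s i)))"
  proof (rule sum_mono)
    fix i assume i: "i \<in> {..<k}"
    have "p \<le> s i" "s (Suc i) \<le> q" using part_range[OF P, of i] part_range[OF P, of "Suc i"] i by auto
    moreover have "s i \<le> \<sigma> i" "\<sigma> i \<le> s (Suc i)" using T i by (auto simp: tagged_def)
    ultimately have "norm (F (\<gamma> \<tau>0) - F (\<gamma> (\<sigma> i))) \<le> \<eta>" using cl by auto
    then show "\<bar>(F (\<gamma> \<tau>0) - F (\<gamma> (\<sigma> i))) \<bullet> (\<gamma> (s (Suc i)) - \<gamma> (s i))\<bar> \<le> \<eta> * norm (\<gamma> (s (Suc i)) - \<gamma> (s i))"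
      by (rule order_trans[OF Cauchy_Schwarz_ineq2 mult_right_mono]) simp
  qed
  also have "\<dots> = \<eta> * PL k s \<sigma>" by (simp add: psum_def sum_distrib_left)
  finally show ?thesis .
qed

lemma main: "has_path_integral F \<gamma> a b (f (\<gamma> b) - f (\<gamma> a))"
  unfolding has_path_integral_def
proof (intro allI impI)
  fix \<epsilon> :: real assume \<epsilon>: "\<epsilon> > 0"
  have B0: "BB \<ge> 0" by (rule BB)
  define \<eta> where "\<eta> = \<epsilon> / (2 * (BB + 1))"
  have \<eta>: "\<eta> > 0" using \<epsilon> B0 by (simp add: \<eta>_def)
  have "uniformly_continuous_on {a..b} (\<lambda>s. F (\<gamma> s))"
    by (rule compact_uniformly_continuous[OF continuous_on_compose2[OF cF cg img] compact_Icc])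
  then obtain d where d: "d > 0" "\<forall>x\<in>{a..b}. \<forall>x'\<in>{a..b}. dist x' x < d \<longrightarrow> dist (F (\<gamma> x')) (F (\<gamma> x)) < \<eta>"
    using \<eta> unfolding uniformly_continuous_on_def by metis
  show "\<exists>\<delta>>0. \<forall>n t \<tau>. is_partition a b n t \<and> (\<forall>j<n. t (Suc j) - t j < \<delta>) \<and>
        (\<forall>j<n. t j \<le> \<tau> j \<and> \<tau> j \<le> t (Suc j)) \<longrightarrow>
        \<bar>(\<Sum>j<n. F (\<gamma> (\<tau> j)) \<bullet> (\<gamma> (t (Suc j)) - \<gamma> (t j))) - (f (\<gamma> b) - f (\<gamma> a))\<bar> < \<epsilon>"
  proof (intro exI[of _ d] conjI allI impI d(1))
    fix n t \<tau> assume H: "is_partition a b n t \<and> (\<forall>j<n. t (Suc j) - t j < d) \<and> (\<forall>j<n. t j \<le> \<tau> j \<and> \<tau> j \<le> t (Suc j))"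
    then have P: "is_partition a b n t" and mesh: "\<forall>j<n. t (Suc j) - t j < d"
      and tg: "\<forall>j<n. t j \<le> \<tau> j \<and> \<tau> j \<le> t (Suc j)" by auto
    define \<epsilon>1 where "\<epsilon>1 = \<epsilon> / (2 * (real n + 1))"
    have \<epsilon>1: "\<epsilon>1 > 0" using \<epsilon> by (simp add: \<epsilon>1_def)
    have claim: "\<exists>m' t' \<tau>'. tagged a (t m) m' t' \<tau>' \<and> \<bar>RS m' t' \<tau>' - (f (\<gamma> (t m)) - f (\<gamma> a))\<bar> \<le> real m * \<epsilon>1 \<and>
        \<bar>(\<Sum>j<m. F (\<gamma> (\<tau> j)) \<bullet> (\<gamma> (t (Suc j)) - \<gamma> (t j))) - RS m' t' \<tau>'\<bar> \<le> \<eta> * PL m' t' \<tau>'"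
      if "m \<le> n" for m
      using that
    proof (induction m)
      case 0
      have "t 0 = a" using P by (simp add: is_partition_def)
      then show ?case using empty_tagged[of a] by (intro exI[of _ 0]) (auto simp: psum_0)
    next
      case (Suc m)
      then have mn: "m < n" by simp
      obtain m' t' \<tau>' where IH: "tagged a (t m) m' t' \<tau>'"
        "\<bar>RS m' t' \<tau>' - (f (\<gamma> (t m)) - f (\<gamma> a))\<bar> \<le> real m * \<epsilon>1"
        "\<bar>(\<Sum>j<m. F (\<gamma> (\<tau> j)) \<bullet> (\<gamma> (t (Suc j)) - \<gamma> (t j))) - RS m' t' \<tau>'\<bar> \<le> \<eta> * PL m' t' \<tau>'"
        using Suc by auto
      have r1: "a \<le> t m" "t (Suc m) \<le> b" using part_range[OF P, of m] part_range[OF P, of "Suc m"] mn by auto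
      have r2: "t m < t (Suc m)" using P mn by (simp add: is_partition_def)
      obtain k s \<sigma> where R: "tagged (t m) (t (Suc m)) k s \<sigma>"
        "\<bar>RS k s \<sigma> - (f (\<gamma> (t (Suc m))) - f (\<gamma> (t m)))\<bar> \<le> \<epsilon>1"
        using approx[OF r1(1) less_imp_le[OF r2] r1(2) \<epsilon>1] by blast
      have cl: "\<forall>r\<in>{t m..t (Suc m)}. norm (F (\<gamma> (\<tau> m)) - F (\<gamma> r)) \<le> \<eta>"
      proof
        fix r assume r: "r \<in> {t m..t (Suc m)}"
        have "\<tau> m \<in> {a..b}" "r \<in> {a..b}" using tg mn r r1 by auto
        moreover have "dist r (\<tau> m) < d"
        proof -
          have "t (Suc m) - t m < d" "t m \<le> \<tau> m" "\<tau> m \<le> t (Suc m)" using tg mesh mn by auto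
          then show ?thesis using r by (simp add: dist_real_def abs_less_iff)
        qed
        ultimately have "dist (F (\<gamma> r)) (F (\<gamma> (\<tau> m))) < \<eta>" using d(2) by blast
        then show "norm (F (\<gamma> (\<tau> m)) - F (\<gamma> r)) \<le> \<eta>" by (simp add: dist_norm norm_minus_commute)
      qed
      have rf: "\<bar>F (\<gamma> (\<tau> m)) \<bullet> (\<gamma> (t (Suc m)) - \<gamma> (t m)) - RS k s \<sigma>\<bar> \<le> \<eta> * PL k s \<sigma>"
        by (rule refine[OF R(1) cl])
      obtain t'' \<tau>'' where C: "tagged a (t (Suc m)) (m'+k) t'' \<tau>''"
          "\<forall>g::real\<Rightarrow>real\<Rightarrow>real\<Rightarrow>real. psum g (m'+k) t'' \<tau>'' = psum g m' t' \<tau>' + psum g k s \<sigma>"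
        using concat2[OF IH(1) R(1), of "\<lambda>_ _ _. True"] by auto
      have eq1: "RS (m'+k) t'' \<tau>'' - (f (\<gamma> (t (Suc m))) - f (\<gamma> a)) =
         (RS m' t' \<tau>' - (f (\<gamma> (t m)) - f (\<gamma> a))) + (RS k s \<sigma> - (f (\<gamma> (t (Suc m))) - f (\<gamma> (t m))))"
        using C(2) by simp
      have b1: "\<bar>RS (m'+k) t'' \<tau>'' - (f (\<gamma> (t (Suc m))) - f (\<gamma> a))\<bar> \<le> real m * \<epsilon>1 + \<epsilon>1"
        unfolding eq1 by (rule order_trans[OF abs_triangle_ineq add_mono[OF IH(2) R(2)]])
      have eq2: "(\<Sum>j<Suc m. F (\<gamma> (\<tau> j)) \<bullet> (\<gamma> (t (Suc j)) - \<gamma> (t j))) - RS (m'+k) t'' \<tau>'' =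
         ((\<Sum>j<m. F (\<gamma> (\<tau> j)) \<bullet> (\<gamma> (t (Suc j)) - \<gamma> (t j))) - RS m' t' \<tau>') +
         (F (\<gamma> (\<tau> m)) \<bullet> (\<gamma> (t (Suc m)) - \<gamma> (t m)) - RS k s \<sigma>)"
        using C(2) by simp
      have b2: "\<bar>(\<Sum>j<Suc m. F (\<gamma> (\<tau> j)) \<bullet> (\<gamma> (t (Suc j)) - \<gamma> (t j))) - RS (m'+k) t'' \<tau>''\<bar>
          \<le> \<eta> * PL m' t' \<tau>' + \<eta> * PL k s \<sigma>"
        unfolding eq2 by (rule order_trans[OF abs_triangle_ineq add_mono[OF IH(3) rf]])
      have "\<eta> * PL m' t' \<tau>' + \<eta> * PL k s \<sigma> = \<eta> * PL (m'+k) t'' \<tau>''"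
        using C(2) by (simp add: distrib_left)
      then show ?case using C(1) b1 b2 by (intro exI[of _ "m'+k"] exI[of _ t''] exI[of _ \<tau>'']) (simp add: algebra_simps)
    qed
    obtain m' t' \<tau>' where Cl: "tagged a (t n) m' t' \<tau>'" "\<bar>RS m' t' \<tau>' - (f (\<gamma> (t n)) - f (\<gamma> a))\<bar> \<le> real n * \<epsilon>1"
        "\<bar>(\<Sum>j<n. F (\<gamma> (\<tau> j)) \<bullet> (\<gamma> (t (Suc j)) - \<gamma> (t j))) - RS m' t' \<tau>'\<bar> \<le> \<eta> * PL m' t' \<tau>'"
      using claim[of n] by auto
    have tn: "t n = b" using P by (simp add: is_partition_def)
    have "PL m' t' \<tau>' \<le> BB" using PL_bound[of a b m' t' \<tau>'] Cl(1) tn ab by simp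
    then have "\<eta> * PL m' t' \<tau>' \<le> \<eta> * (BB + 1)" using \<eta> by (intro mult_left_mono) auto
    also have "\<dots> = \<epsilon> / 2" using B0 by (simp add: \<eta>_def field_simps)
    finally have e1: "\<eta> * PL m' t' \<tau>' \<le> \<epsilon> / 2" .
    have e2: "real n * \<epsilon>1 < \<epsilon> / 2"
    proof -
      have "real n * \<epsilon>1 = \<epsilon> / 2 * (real n / (real n + 1))" by (simp add: \<epsilon>1_def field_simps)
      also have "\<dots> < \<epsilon> / 2 * 1" using \<epsilon> by (intro mult_strict_left_mono) auto
      finally show ?thesis by simp
    qed
    have "(\<Sum>j<n. F (\<gamma> (\<tau> j)) \<bullet> (\<gamma> (t (Suc j)) - \<gamma> (t j))) - (f (\<gamma> b) - f (\<gamma> a)) =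
       ((\<Sum>j<n. F (\<gamma> (\<tau> j)) \<bullet> (\<gamma> (t (Suc j)) - \<gamma> (t j))) - RS m' t' \<tau>') + (RS m' t' \<tau>' - (f (\<gamma> (t n)) - f (\<gamma> a)))"
      using tn by simp
    then have "\<bar>(\<Sum>j<n. F (\<gamma> (\<tau> j)) \<bullet> (\<gamma> (t (Suc j)) - \<gamma> (t j))) - (f (\<gamma> b) - f (\<gamma> a))\<bar> \<le> \<eta> * PL m' t' \<tau>' + real n * \<epsilon>1"
      by (metis order_trans[OF abs_triangle_ineq add_mono[OF Cl(3) Cl(2)]])
    then show "\<bar>(\<Sum>j<n. F (\<gamma> (\<tau> j)) \<bullet> (\<gamma> (t (Suc j)) - \<gamma> (t j))) - (f (\<gamma> b) - f (\<gamma> a))\<bar> < \<epsilon>"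
      using e1 e2 by linarith
  qed
qed

end

theorem mainTheorem3:
  fixes K :: "'a::euclidean_space set" and f :: "'a \<Rightarrow> real" and F :: "'a \<Rightarrow> 'a"
    and \<gamma> :: "real \<Rightarrow> 'a" and a b :: real
  assumes "compact K"
    and "continuous_on K f" and "continuous_on K F"
    and "a \<le> b" and "continuous_on {a..b} \<gamma>" and "\<gamma> ` {a..b} \<subseteq> K"
    and "rectifiable_path_on a b \<gamma>"
    and "finite {x \<in> \<gamma> ` {a..b}. \<not> (((\<lambda>y. (f y - f x - F x \<bullet> (y - x)) / norm (y - x))
              \<longlongrightarrow> 0) (at x within K))}"
  shows "has_path_integral F \<gamma> a b (f (\<gamma> b) - f (\<gamma> a))"
proof -
  interpret sett K f F \<gamma> a b using assms by unfold_locales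
  show ?thesis by (rule main)
qed

end
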